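(* The metric space $(\mathtt{CA},\delta)$ is not complete: there is a Cauchy sequence in $(\mathtt{CA},\delta)$ that does not converge to any element of $\mathtt{CA}$.
   Context: $\Sigma$ is a finite alphabet with $|\Sigma|\ge2$, $N(r)=[-r,r]$. A cellular automaton (CA) is a map $c:\Sigma^\mathbb{Z}\to\Sigma^\mathbb{Z}$ of the form $c(x)_i=F(x_{[i-r,i+r]})$ for a local function $F:\Sigma^{N(r)}\to\Sigma$. $\mathtt{CA}$ is the set of all CA. For $c,d\in\mathtt{CA}$ with common radius $r$, $D^c_d$ is the set of $w\in\Sigma^{N(r)}$ on which the local rules of $c$ and $d$ give different outputs, and $\delta(c,d)=|D^c_d|/|\Sigma|^{2r+1}$ (independent of $r$). *)

theory Defs
  imports "HOL-Library.FuncSet" Complex_Main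
begin

type_synonym 'a config = "int \<Rightarrow> 'a"

text \<open>Neighbourhood N(r) = [-r,r] and the patterns on it (Sigma^N(r)),
  represented as extensional functions (undefined outside N(r)).\<close>
definition nbhd :: "nat \<Rightarrow> int set" where
  "nbhd r = {- int r .. int r}"

definition patterns :: "nat \<Rightarrow> (int \<Rightarrow> 'a) set" where
  "patterns r = nbhd r \<rightarrow>\<^sub>E (UNIV :: 'a set)"

definition is_CA_radius :: "nat \<Rightarrow> ('a config \<Rightarrow> 'a config) \<Rightarrow> bool" where
  "is_CA_radius r c \<longleftrightarrow>
     (\<exists>F :: (int \<Rightarrow> 'a) \<Rightarrow> 'a. \<forall>x i.
        c x i = F (\<lambda>j. if j \<in> nbhd r then x (i + j) else undefined))"

definition CA :: "('a config \<Rightarrow> 'a config) set" where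
  "CA = {c. \<exists>r. is_CA_radius r c}"

definition local_rule :: "('a config \<Rightarrow> 'a config) \<Rightarrow> (int \<Rightarrow> 'a) \<Rightarrow> 'a" where
  "local_rule c w = c w 0"

definition diff_set :: "nat \<Rightarrow> ('a config \<Rightarrow> 'a config) \<Rightarrow> ('a config \<Rightarrow> 'a config)
    \<Rightarrow> (int \<Rightarrow> 'a) set" where
  "diff_set r c d = {w \<in> patterns r. local_rule c w \<noteq> local_rule d w}"

text \<open>delta(c,d) computed at the least common radius (independent of the radius).\<close>
definition delta :: "('a::finite config \<Rightarrow> 'a config) \<Rightarrow> ('a config \<Rightarrow> 'a config) \<Rightarrow> real" where
  "delta c d = (let r = (LEAST r. is_CA_radius r c \<and> is_CA_radius r d) in
     real (card (diff_set r c d)) / real (card (UNIV :: 'a set)) ^ (2 * r + 1))"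

end

theory Submission
  imports Defs
begin

fun pos :: "'a \<Rightarrow> nat \<Rightarrow> 'a config \<Rightarrow> nat \<Rightarrow> nat" where
  "pos a 0 x j = 2*j+2"
| "pos a (Suc n) x j = (if x (int (2*j+1)) \<noteq> a then 2*j+2 else pos a n x (j+1))"

definition sq :: "'a \<Rightarrow> nat \<Rightarrow> 'a config \<Rightarrow> 'a config" where
  "sq a n x i = x (i + int (pos a n (\<lambda>t. x (i+t)) 0))"

lemma pos_bounds: "2*j+2 \<le> pos a n x j \<and> pos a n x j \<le> 2*(j+n)+2"
proof (induction n arbitrary: j)
  case 0 then show ?case by simp
next
  case (Suc n)
  have "2*(j+1)+2 \<le> pos a n x (j+1) \<and> pos a n x (j+1) \<le> 2*(j+1+n)+2" by (rule Suc.IH)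
  then show ?case by auto
qed

lemma pos_even: "even (pos a n x j)"
  by (induction n arbitrary: j) auto

lemma pos_local:
  "(\<And>i. i < n \<Longrightarrow> x (int (2*(j+i)+1)) = y (int (2*(j+i)+1))) \<Longrightarrow> pos a n x j = pos a n y j"
proof (induction n arbitrary: j)
  case 0 then show ?case by simp
next
  case (Suc n)
  have e: "x (int (2*j+1)) = y (int (2*j+1))" using Suc.prems[of 0] by simp
  have "pos a n x (j+1) = pos a n y (j+1)"
    using Suc.IH[of "j+1"] Suc.prems[of "Suc _"] by (simp add: algebra_simps)
  then show ?case using e by simp
qed

lemma pos_far:
  "(\<And>i. i < K \<Longrightarrow> x (int (2*(j+i)+1)) = a) \<Longrightarrow> K \<le> n \<Longrightarrow> 2*(j+K)+2 \<le> pos a n x j"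
proof (induction n arbitrary: j K)
  case 0 then show ?case by simp
next
  case (Suc n)
  show ?case
  proof (cases K)
    case 0 then show ?thesis using pos_bounds[of j a "Suc n" x] by simp
  next
    case (Suc K')
    have e: "x (int (2*j+1)) = a" using Suc.prems(1)[of 0] Suc by simp
    have h: "\<And>i. i < K' \<Longrightarrow> x (int (2*(j+1+i)+1)) = a"
    proof -
      fix i assume "i < K'"
      then have "x (int (2*(j+Suc i)+1)) = a" using Suc.prems(1)[of "Suc i"] Suc by simp
      then show "x (int (2*(j+1+i)+1)) = a" by simp
    qed
    have "2*(j+1+K')+2 \<le> pos a n x (j+1)"
      using Suc.IH[of K' "j+1", OF h] Suc.prems Suc by simp
    then show ?thesis using e Suc by simp
  qed
qed

lemma pos_diff:
  "pos a m x j \<noteq> pos a n x j \<Longrightarrow> i < min m n \<Longrightarrow> x (int (2*(j+i)+1)) = a"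
proof (induction m arbitrary: n j i)
  case 0 then show ?case by simp
next
  case (Suc m)
  then obtain n' where n: "n = Suc n'" by (cases n) auto
  have e: "x (int (2*j+1)) = a" using Suc.prems n by (auto split: if_splits)
  show ?case
  proof (cases i)
    case 0 then show ?thesis using e by simp
  next
    case (Suc i')
    have "pos a m x (j+1) \<noteq> pos a n' x (j+1)" using Suc.prems n e by simp
    from Suc.IH[OF this, of i'] Suc.prems Suc n show ?thesis by (simp add: algebra_simps)
  qed
qed

lemma pos_all_a:
  "(\<And>i. i < n \<Longrightarrow> x (int (2*(j+i)+1)) = a) \<Longrightarrow> pos a n x j = 2*(j+n)+2"
proof (induction n arbitrary: j)
  case 0 then show ?case by simp
next
  case (Suc n)
  have e: "x (int (2*j+1)) = a" using Suc.prems[of 0] by simp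
  have "pos a n x (j+1) = 2*(j+1+n)+2"
    using Suc.IH[of "j+1"] Suc.prems[of "Suc _"] by (simp add: algebra_simps)
  then show ?case using e by simp
qed

lemma radius_mono:
  assumes "is_CA_radius r c" "r \<le> r'" shows "is_CA_radius r' c"
proof -
  obtain F where F: "\<And>x i. c x i = F (\<lambda>j. if j \<in> nbhd r then x (i + j) else undefined)"
    using assms(1) unfolding is_CA_radius_def by blast
  have sub: "nbhd r \<subseteq> nbhd r'" using assms(2) unfolding nbhd_def by auto
  show ?thesis unfolding is_CA_radius_def
  proof (intro exI allI)
    fix x i
    show "c x i = (\<lambda>w. F (\<lambda>j. if j \<in> nbhd r then w j else undefined))
                    (\<lambda>j. if j \<in> nbhd r' then x (i + j) else undefined)"
      apply (subst F) apply (rule arg_cong[where f=F]) apply (rule ext) using sub by auto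
  qed
qed

lemma sq_CA: "is_CA_radius (2*n+2) (sq a n)"
  unfolding is_CA_radius_def
proof (intro exI allI)
  fix x :: "'a config" and i
  let ?W = "\<lambda>j. if j \<in> nbhd (2*n+2) then x (i + j) else undefined"
  have p: "pos a n ?W 0 = pos a n (\<lambda>t. x (i+t)) 0"
    by (rule pos_local) (auto simp: nbhd_def)
  have b: "pos a n ?W 0 \<le> 2*n+2" using pos_bounds[of 0 a n ?W] by simp
  show "sq a n x i = (\<lambda>w. w (int (pos a n w 0))) ?W"
    using p b by (simp add: sq_def nbhd_def)
qed

lemma sq_radius_lb:
  assumes "is_CA_radius r (sq a n)" "(b::'a) \<noteq> a" shows "2*n+2 \<le> r"
proof (rule ccontr)
  assume "\<not> 2*n+2 \<le> r"
  obtain F where F: "\<And>x i. sq a n x i = F (\<lambda>j. if j \<in> nbhd r then x (i + j) else undefined)"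
    using assms(1) unfolding is_CA_radius_def by blast
  define x :: "'a config" where "x = (\<lambda>_. a)"
  define y where "y = x(int (2*n+2) := b)"
  have w: "(\<lambda>j. if j \<in> nbhd r then x (0 + j) else undefined)
         = (\<lambda>j. if j \<in> nbhd r then y (0 + j) else undefined)"
    using \<open>\<not> 2*n+2 \<le> r\<close> by (auto simp: y_def nbhd_def)
  have px: "pos a n x 0 = 2*n+2" using pos_all_a[of n x 0 a] by (simp add: x_def)
  have py: "pos a n y 0 = 2*n+2" using pos_all_a[of n y 0 a] by (simp add: x_def y_def)
  have "sq a n x 0 = a" by (simp add: sq_def x_def)
  moreover have "sq a n y 0 = y (int (pos a n y 0))" by (simp add: sq_def)
  then have "sq a n y 0 = b" using py by (simp add: y_def)
  moreover have "sq a n x 0 = sq a n y 0" using F w by metis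
  ultimately show False using assms(2) by simp
qed

lemma local_rule_sq: "local_rule (sq a n) w = w (int (pos a n w 0))"
  by (simp add: local_rule_def sq_def)

lemma card_nbhd: "card (nbhd r) = 2*r+1"
  unfolding nbhd_def by simp

lemma card_constr:
  fixes a :: "'a::finite"
  assumes "T \<subseteq> nbhd r"
  shows "card {w \<in> patterns r. \<forall>t\<in>T. w t = a} = card (UNIV::'a set) ^ (2*r+1 - card T)"
proof -
  have eq: "{w \<in> patterns r. \<forall>t\<in>T. w t = a} = PiE (nbhd r) (\<lambda>t. if t \<in> T then {a} else UNIV)"
    using assms unfolding patterns_def by (auto simp: PiE_iff extensional_def split: if_splits)
  have fin: "finite (nbhd r)" unfolding nbhd_def by simp
  have "card (PiE (nbhd r) (\<lambda>t. if t \<in> T then {a} else UNIV))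
        = (\<Prod>t\<in>nbhd r. card (if t \<in> T then {a} else (UNIV::'a set)))"
    by (rule card_PiE[OF fin])
  also have "\<dots> = (\<Prod>t\<in>nbhd r. if t \<in> T then 1 else card (UNIV::'a set))"
    by (rule prod.cong) auto
  also have "\<dots> = card (UNIV::'a set) ^ card (nbhd r - T)"
    using fin by (simp add: prod.If_cases Int_absorb1 assms) (metis Diff_eq)
  also have "card (nbhd r - T) = 2*r+1 - card T"
    using assms fin by (simp add: card_Diff_subset finite_subset card_nbhd)
  finally show ?thesis using eq by simp
qed

lemma T_facts:
  assumes "2*k \<le> r"
  shows "card ((\<lambda>i. int (2*i+1)) ` {..<k}) = k" "(\<lambda>i. int (2*i+1)) ` {..<k} \<subseteq> nbhd r"
proof -
  have "inj_on (\<lambda>i. int (2*i+1)) {..<k}" by (auto simp: inj_on_def)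
  then show "card ((\<lambda>i. int (2*i+1)) ` {..<k}) = k" by (simp add: card_image)
  show "(\<lambda>i. int (2*i+1)) ` {..<k} \<subseteq> nbhd r" using assms by (auto simp: nbhd_def)
qed

lemma ratio_bound:
  assumes "card D \<le> (q::nat) ^ (N - k)" "k \<le> N" "q \<ge> 2"
  shows "real (card D) / real q ^ N \<le> 1 / 2 ^ k"
proof -
  have qp: "real q > 0" using assms by simp
  have "real (card D) / real q ^ N \<le> real q ^ (N - k) / real q ^ N"
    using assms(1) qp by (simp add: divide_right_mono of_nat_le_iff[symmetric] del: of_nat_le_iff)
  also have "\<dots> = 1 / real q ^ k" using qp assms(2) by (simp add: power_diff)
  also have "\<dots> \<le> 1 / 2 ^ k"
    using assms(3) by (intro divide_left_mono power_mono) auto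
  finally show ?thesis .
qed

lemma delta_upper:
  fixes a b :: "'a::finite"
  assumes "b \<noteq> a" "card (UNIV::'a set) \<ge> 2"
  shows "delta (sq a m) (sq a n) \<le> 1 / 2 ^ (min m n)"
proof -
  define r where "r = (LEAST r. is_CA_radius r (sq a m) \<and> is_CA_radius r (sq a n))"
  have "is_CA_radius (max (2*m+2) (2*n+2)) (sq a m) \<and> is_CA_radius (max (2*m+2) (2*n+2)) (sq a n)"
    using radius_mono[OF sq_CA[of m a], of "max (2*m+2) (2*n+2)"]
          radius_mono[OF sq_CA[of n a], of "max (2*m+2) (2*n+2)"] by simp
  then have R: "is_CA_radius r (sq a m) \<and> is_CA_radius r (sq a n)"
    unfolding r_def by (rule LeastI)
  have rm: "2*m+2 \<le> r" "2*n+2 \<le> r"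
    using sq_radius_lb[OF conjunct1[OF R] assms(1)] sq_radius_lb[OF conjunct2[OF R] assms(1)] by auto
  define k where "k = min m n"
  define T where "T = (\<lambda>i. int (2*i+1)) ` {..<k}"
  have Tf: "card T = k" "T \<subseteq> nbhd r" unfolding T_def using T_facts[of k r] rm k_def by auto
  have sub: "diff_set r (sq a m) (sq a n) \<subseteq> {w \<in> patterns r. \<forall>t\<in>T. w t = a}"
  proof
    fix w assume "w \<in> diff_set r (sq a m) (sq a n)"
    then have w: "w \<in> patterns r" "w (int (pos a m w 0)) \<noteq> w (int (pos a n w 0))"
      by (auto simp: diff_set_def local_rule_sq)
    then have "pos a m w 0 \<noteq> pos a n w 0" by auto
    then have "\<forall>t\<in>T. w t = a" using pos_diff[of a m w 0 n] unfolding T_def k_def by auto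
    then show "w \<in> {w \<in> patterns r. \<forall>t\<in>T. w t = a}" using w by simp
  qed
  have fin: "finite {w \<in> patterns r. \<forall>t\<in>T. w t = a}"
  proof -
    have "finite (patterns r :: (int \<Rightarrow> 'a) set)"
      unfolding patterns_def nbhd_def by (intro finite_PiE) auto
    then show ?thesis by (rule finite_subset[rotated]) auto
  qed
  have "card (diff_set r (sq a m) (sq a n)) \<le> card (UNIV::'a set) ^ (2*r+1 - k)"
    using card_mono[OF fin sub] card_constr[OF Tf(2), of a] Tf(1) by simp
  from ratio_bound[OF this _ assms(2)] rm k_def
  show ?thesis unfolding delta_def r_def[symmetric] Let_def k_def by simp
qed

lemma derange:
  assumes "card (UNIV::'a::finite set) \<ge> 2"
  shows "\<exists>g::'a\<Rightarrow>'a. inj g \<and> (\<forall>v. g v \<noteq> v)"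
proof -
  define q where "q = card (UNIV::'a set)"
  obtain h :: "'a \<Rightarrow> nat" where h: "bij_betw h UNIV {0..<q}"
    unfolding q_def using ex_bij_betw_finite_nat[of "UNIV::'a set"] by auto
  define g where "g v = inv_into UNIV h ((h v + 1) mod q)" for v
  have q2: "q \<ge> 2" using assms q_def by simp
  have hg: "h (g v) = (h v + 1) mod q" for v
    unfolding g_def using q2 by (intro bij_betw_inv_into_right[OF h]) auto
  have hlt: "h v < q" for v using h by (auto simp: bij_betw_def)
  have hinj: "inj h" using h by (auto simp: bij_betw_def)
  have "inj g"
  proof (rule injI)
    fix x y assume "g x = g y"
    then have "(h x + 1) mod q = (h y + 1) mod q" using hg by metis
    then have "h x = h y" using hlt[of x] hlt[of y]
      by (cases "h x + 1 = q"; cases "h y + 1 = q") auto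
    then show "x = y" using hinj by (simp add: inj_eq)
  qed
  moreover have "g v \<noteq> v" for v
  proof
    assume "g v = v"
    then have "h v = (h v + 1) mod q" using hg by metis
    then show False using hlt[of v] q2 by (cases "h v + 1 = q") auto
  qed
  ultimately show ?thesis by blast
qed

lemma delta_lower:
  fixes a b :: "'a::finite" and g :: "'a \<Rightarrow> 'a"
  assumes ab: "b \<noteq> a" and q2: "card (UNIV::'a set) \<ge> 2" and ginj: "inj g"
    and gfix: "\<And>v. g v \<noteq> v" and cK: "is_CA_radius K c" and Kn: "K \<le> n"
  shows "1 / (2 * real (card (UNIV::'a set)) ^ K) \<le> delta (sq a n) c"
proof -
  define q where "q = card (UNIV::'a set)"
  define r where "r = (LEAST r. is_CA_radius r (sq a n) \<and> is_CA_radius r c)"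
  have "is_CA_radius (max (2*n+2) K) (sq a n) \<and> is_CA_radius (max (2*n+2) K) c"
    using radius_mono[OF sq_CA[of n a], of "max (2*n+2) K"]
          radius_mono[OF cK, of "max (2*n+2) K"] by simp
  then have R: "is_CA_radius r (sq a n) \<and> is_CA_radius r c"
    unfolding r_def by (rule LeastI)
  have rn: "2*n+2 \<le> r" using sq_radius_lb[OF conjunct1[OF R] ab] .
  define T where "T = (\<lambda>i. int (2*i+1)) ` {..<K}"
  have Tf: "card T = K" "T \<subseteq> nbhd r" unfolding T_def using T_facts[of K r] rn Kn by auto
  define E where "E = {w \<in> patterns r. \<forall>t\<in>T. w t = a}"
  have cardE: "card E = q ^ (2*r+1 - K)"
    unfolding E_def q_def using card_constr[OF Tf(2), of a] Tf(1) by simp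
  define D where "D = diff_set r (sq a n) c"
  define P where "P w = int (pos a n w 0)" for w :: "int \<Rightarrow> 'a"
  define \<phi> where "\<phi> w = w(P w := g (w (P w)))" for w
  obtain F where F: "\<And>x i. c x i = F (\<lambda>j. if j \<in> nbhd K then x (i + j) else undefined)"
    using cK unfolding is_CA_radius_def by blast
  have finP: "finite (patterns r :: (int \<Rightarrow> 'a) set)"
    unfolding patterns_def nbhd_def by (intro finite_PiE) auto
  have finD: "finite D" unfolding D_def diff_set_def by (rule finite_subset[OF _ finP]) auto
  have Efacts: "2*K+2 \<le> pos a n w 0 \<and> pos a n w 0 \<le> 2*n+2 \<and> even (pos a n w 0)
      \<and> pos a n (\<phi> w) 0 = pos a n w 0 \<and> \<phi> w \<in> E" if wE: "w \<in> E" for w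
  proof -
    have wa: "w (int (2*i+1)) = a" if "i < K" for i using wE that unfolding E_def T_def by auto
    have p1: "2*K+2 \<le> pos a n w 0" using pos_far[of K w 0 a n] wa Kn by simp
    have p2: "pos a n w 0 \<le> 2*n+2" using pos_bounds[of 0 a n w] by simp
    have p3: "even (pos a n w 0)" by (rule pos_even)
    have odd_ne: "int (2*i+1) \<noteq> P w" for i
    proof
      assume "int (2*i+1) = P w"
      then have "2*i+1 = pos a n w 0" unfolding P_def by simp
      then have "even (2*i+1::nat)" using p3 by simp
      then show False by simp
    qed
    have p4: "pos a n (\<phi> w) 0 = pos a n w 0"
      apply (rule pos_local) unfolding \<phi>_def using odd_ne by (metis add_0 fun_upd_other)
    have Pin: "P w \<in> nbhd r" using p2 rn unfolding P_def nbhd_def by auto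
    have "w \<in> patterns r" using wE unfolding E_def by simp
    then have "\<phi> w \<in> patterns r" using Pin unfolding patterns_def \<phi>_def
      by (auto simp: PiE_iff extensional_def)
    moreover have "\<forall>t\<in>T. \<phi> w t = a" using wa odd_ne unfolding T_def \<phi>_def by auto
    ultimately have "\<phi> w \<in> E" unfolding E_def by simp
    then show ?thesis using p1 p2 p3 p4 by simp
  qed
  have key: "w \<in> D \<or> \<phi> w \<in> D" if wE: "w \<in> E" for w
  proof (rule ccontr)
    assume nd: "\<not> (w \<in> D \<or> \<phi> w \<in> D)"
    have pats: "w \<in> patterns r" "\<phi> w \<in> patterns r" using wE Efacts[OF wE] unfolding E_def by auto
    have e1: "local_rule (sq a n) w = local_rule c w" using nd pats unfolding D_def diff_set_def by auto
    have e2: "local_rule (sq a n) (\<phi> w) = local_rule c (\<phi> w)" using nd pats unfolding D_def diff_set_def by auto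
    have e3: "local_rule (sq a n) (\<phi> w) = g (w (P w))"
      using Efacts[OF wE] unfolding local_rule_sq P_def \<phi>_def by simp
    have e4: "local_rule (sq a n) w = w (P w)" unfolding local_rule_sq P_def by simp
    have "P w \<notin> nbhd K" using Efacts[OF wE] unfolding P_def nbhd_def by auto
    then have "(\<lambda>j. if j \<in> nbhd K then \<phi> w (0 + j) else undefined)
             = (\<lambda>j. if j \<in> nbhd K then w (0 + j) else undefined)"
      unfolding \<phi>_def by (auto intro!: ext)
    then have e5: "local_rule c (\<phi> w) = local_rule c w" unfolding local_rule_def using F by metis
    show False using e1 e2 e3 e4 e5 gfix by metis
  qed
  have injphi: "inj_on \<phi> E"
  proof (rule inj_onI)
    fix w1 w2 assume w1: "w1 \<in> E" and w2: "w2 \<in> E" and eq: "\<phi> w1 = \<phi> w2"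
    have "pos a n w1 0 = pos a n w2 0"
      using Efacts[OF w1] Efacts[OF w2] eq by metis
    then have Peq: "P w1 = P w2" unfolding P_def by simp
    have "g (w1 (P w1)) = g (w2 (P w2))" using fun_cong[OF eq, of "P w1"] Peq unfolding \<phi>_def by simp
    then have v: "w1 (P w1) = w2 (P w1)" using ginj Peq by (simp add: inj_eq)
    show "w1 = w2"
    proof
      fix t show "w1 t = w2 t"
      proof (cases "t = P w1")
        case True then show ?thesis using v by simp
      next
        case False then show ?thesis using fun_cong[OF eq, of t] Peq unfolding \<phi>_def by simp
      qed
    qed
  qed
  have "card {w \<in> E. \<phi> w \<in> D} \<le> card D"
    by (rule card_inj_on_le[OF inj_on_subset[OF injphi] _ finD]) auto
  moreover have "card E \<le> card D + card {w \<in> E. \<phi> w \<in> D}"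
  proof -
    have "E \<subseteq> D \<union> {w \<in> E. \<phi> w \<in> D}" using key by auto
    then have "card E \<le> card (D \<union> {w \<in> E. \<phi> w \<in> D})"
      by (rule card_mono[rotated]) (use finD finP in \<open>auto simp: E_def\<close>)
    also have "\<dots> \<le> card D + card {w \<in> E. \<phi> w \<in> D}" by (rule card_Un_le)
    finally show ?thesis .
  qed
  ultimately have cD: "q ^ (2*r+1 - K) \<le> 2 * card D" using cardE by simp
  have qp: "real q > 0" using q2 q_def by simp
  have "real q ^ (2*r+1 - K) \<le> 2 * real (card D)"
    using cD by (metis of_nat_le_iff of_nat_mult of_nat_numeral of_nat_power)
  then have "real q ^ (2*r+1 - K) / (2 * real q ^ (2*r+1)) \<le> real (card D) / real q ^ (2*r+1)"
    using qp by (simp add: divide_simps)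
  moreover have "real q ^ (2*r+1 - K) / (2 * real q ^ (2*r+1)) = 1 / (2 * real q ^ K)"
    using qp Kn rn by (simp add: power_diff)
  ultimately have "1 / (2 * real q ^ K) \<le> real (card D) / real q ^ (2*r+1)" by simp
  then show ?thesis unfolding delta_def r_def[symmetric] Let_def D_def q_def by simp
qed

theorem mainTheorem10:
  assumes "card (UNIV :: 'a::finite set) \<ge> 2"
  shows "\<exists>s :: nat \<Rightarrow> ('a config \<Rightarrow> 'a config).
           (\<forall>n. s n \<in> CA) \<and>
           (\<forall>\<epsilon>>0. \<exists>N. \<forall>m\<ge>N. \<forall>n\<ge>N. delta (s m) (s n) < \<epsilon>) \<and>
           \<not> (\<exists>c\<in>CA. (\<lambda>n. delta (s n) c) \<longlonglongrightarrow> 0)"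
proof -
  obtain a b :: 'a where ab: "b \<noteq> a"
  proof -
    have "\<not> (\<forall>x y::'a. x = y)"
    proof
      assume "\<forall>x y::'a. x = y"
      then have "UNIV \<subseteq> {undefined::'a}" by auto
      then have "card (UNIV::'a set) \<le> 1" using card_mono[of "{undefined::'a}"] by fastforce
      then show False using assms by simp
    qed
    then show ?thesis using that by blast
  qed
  obtain g :: "'a \<Rightarrow> 'a" where g: "inj g" "\<And>v. g v \<noteq> v" using derange[OF assms] by blast
  define s where "s n = sq a n" for n
  have CA: "\<forall>n. s n \<in> CA" unfolding s_def CA_def by (metis (mono_tags) mem_Collect_eq sq_CA)
  have Cauchy: "\<forall>\<epsilon>>0. \<exists>N. \<forall>m\<ge>N. \<forall>n\<ge>N. delta (s m) (s n) < \<epsilon>"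
  proof (intro allI impI)
    fix \<epsilon> :: real assume "\<epsilon> > 0"
    then obtain N where N: "(1/2::real) ^ N < \<epsilon>" using real_arch_pow_inv[of \<epsilon> "1/2"] by auto
    have "delta (s m) (s n) < \<epsilon>" if "m \<ge> N" "n \<ge> N" for m n
    proof -
      have "delta (s m) (s n) \<le> 1 / 2 ^ min m n" unfolding s_def by (rule delta_upper[OF ab assms])
      also have "\<dots> \<le> 1 / 2 ^ N" using that by (intro divide_left_mono power_increasing) auto
      also have "\<dots> < \<epsilon>" using N by (simp add: power_one_over)
      finally show ?thesis .
    qed
    then show "\<exists>N. \<forall>m\<ge>N. \<forall>n\<ge>N. delta (s m) (s n) < \<epsilon>" by blast
  qed
  have NC: "\<not> (\<exists>c\<in>CA. (\<lambda>n. delta (s n) c) \<longlonglongrightarrow> 0)"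
  proof
    assume "\<exists>c\<in>CA. (\<lambda>n. delta (s n) c) \<longlonglongrightarrow> 0"
    then obtain c K where cK: "is_CA_radius K c" and lim: "(\<lambda>n. delta (s n) c) \<longlonglongrightarrow> 0"
      unfolding CA_def by blast
    define e where "e = 1 / (2 * real (card (UNIV::'a set)) ^ K)"
    have "e > 0" unfolding e_def using assms by simp
    from LIMSEQ_D[OF lim this] obtain no where no: "\<And>n. n \<ge> no \<Longrightarrow> norm (delta (s n) c - 0) < e"
      by blast
    define n where "n = max no K"
    have "e \<le> delta (s n) c" unfolding e_def s_def
      by (rule delta_lower[OF ab assms g cK]) (simp add: n_def)
    moreover have "norm (delta (s n) c - 0) < e" using no by (simp add: n_def)
    ultimately show False by simp
  qed
  show ?thesis using CA Cauchy NC by blast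
qed

end
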